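(* Let $K$ and $K'$ be fields with $K'$ a subfield of $K$. If $K$ has a multiplicative basis as a $K'$-vector space, then $K'=K$.
   Context: A $K'$-linear basis $B$ of a $K'$-algebra $R$ is multiplicative if for all $b,b'\in B$ either $bb'=0$ or $bb'\in B$. *)

theory Defs
  imports Main
begin

text \<open>The ambient field K is a type of class field; the subfield K' is a subset F of it.\<close>

definition is_subfield :: "'a::field set \<Rightarrow> bool" where
  "is_subfield F \<longleftrightarrow> 0 \<in> F \<and> 1 \<in> F \<and>
     (\<forall>x\<in>F. \<forall>y\<in>F. x + y \<in> F \<and> x * y \<in> F) \<and>
     (\<forall>x\<in>F. - x \<in> F) \<and> (\<forall>x\<in>F. x \<noteq> 0 \<longrightarrow> inverse x \<in> F)"

definition lin_indep_over :: "'a::field set \<Rightarrow> 'a set \<Rightarrow> bool" where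
  "lin_indep_over F B \<longleftrightarrow>
     (\<forall>S c. finite S \<and> S \<subseteq> B \<and> (\<forall>b\<in>S. c b \<in> F) \<and> (\<Sum>b\<in>S. c b * b) = 0
        \<longrightarrow> (\<forall>b\<in>S. c b = 0))"

definition spans_over :: "'a::field set \<Rightarrow> 'a set \<Rightarrow> bool" where
  "spans_over F B \<longleftrightarrow>
     (\<forall>x. \<exists>S c. finite S \<and> S \<subseteq> B \<and> (\<forall>b\<in>S. c b \<in> F) \<and> x = (\<Sum>b\<in>S. c b * b))"

definition basis_over :: "'a::field set \<Rightarrow> 'a set \<Rightarrow> bool" where
  "basis_over F B \<longleftrightarrow> lin_indep_over F B \<and> spans_over F B"

definition multiplicative_set :: "'a::field set \<Rightarrow> bool" where
  "multiplicative_set B \<longleftrightarrow> (\<forall>b\<in>B. \<forall>b'\<in>B. b * b' = 0 \<or> b * b' \<in> B)"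

end

theory Submission
  imports Defs
begin

lemma subfield_sum:
  assumes "is_subfield F" "finite I" "\<forall>i\<in>I. c i \<in> F"
  shows "(\<Sum>i\<in>I. c i) \<in> F"
  using assms(2,3)
proof (induction I rule: finite_induct)
  case empty then show ?case using assms(1) by (simp add: is_subfield_def)
next
  case (insert x I) then show ?case using assms(1) by (simp add: is_subfield_def)
qed

lemma group_aux:
  fixes f :: "'i \<Rightarrow> 'a::field"
  assumes "finite I" "finite T" "f ` I \<subseteq> T"
  shows "(\<Sum>t\<in>T. (\<Sum>i\<in>{i\<in>I. f i = t}. c i) * t) = (\<Sum>i\<in>I. c i * f i)"
proof -
  have "(\<Sum>t\<in>T. (\<Sum>i\<in>{i\<in>I. f i = t}. c i) * t) = (\<Sum>t\<in>T. (\<Sum>i\<in>{i\<in>I. f i = t}. c i * f i))"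
    by (intro sum.cong refl) (auto simp: sum_distrib_right)
  also have "\<dots> = (\<Sum>i\<in>I. c i * f i)"
    using sum.group[OF assms, of "\<lambda>i. c i * f i"] by simp
  finally show ?thesis .
qed

lemma E3:
  fixes fa :: "'i \<Rightarrow> 'a::field" and fb :: "'j \<Rightarrow> 'a" and fc :: "'k \<Rightarrow> 'a"
  assumes sub: "is_subfield F" and li: "lin_indep_over F B"
    and eq: "(\<Sum>i\<in>Ia. ca i * fa i) + (\<Sum>i\<in>Ib. cb i * fb i) + (\<Sum>i\<in>Ic. cc i * fc i) = 0"
    and fin: "finite Ia" "finite Ib" "finite Ic"
    and im: "fa ` Ia \<subseteq> B" "fb ` Ib \<subseteq> B" "fc ` Ic \<subseteq> B"
    and cF: "\<forall>i\<in>Ia. ca i \<in> F" "\<forall>i\<in>Ib. cb i \<in> F" "\<forall>i\<in>Ic. cc i \<in> F"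
  shows "sum ca Ia + sum cb Ib + sum cc Ic = 0"
proof -
  define T where "T = fa ` Ia \<union> fb ` Ib \<union> fc ` Ic"
  have finT: "finite T" using fin by (simp add: T_def)
  have TB: "T \<subseteq> B" using im by (auto simp: T_def)
  define d where "d t = (\<Sum>i\<in>{i\<in>Ia. fa i = t}. ca i) + (\<Sum>i\<in>{i\<in>Ib. fb i = t}. cb i)
      + (\<Sum>i\<in>{i\<in>Ic. fc i = t}. cc i)" for t
  have s1: "(\<Sum>t\<in>T. (\<Sum>i\<in>{i\<in>Ia. fa i = t}. ca i) * t) = (\<Sum>i\<in>Ia. ca i * fa i)"
    by (rule group_aux) (use fin finT in \<open>auto simp: T_def\<close>)
  have s2: "(\<Sum>t\<in>T. (\<Sum>i\<in>{i\<in>Ib. fb i = t}. cb i) * t) = (\<Sum>i\<in>Ib. cb i * fb i)"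
    by (rule group_aux) (use fin finT in \<open>auto simp: T_def\<close>)
  have s3: "(\<Sum>t\<in>T. (\<Sum>i\<in>{i\<in>Ic. fc i = t}. cc i) * t) = (\<Sum>i\<in>Ic. cc i * fc i)"
    by (rule group_aux) (use fin finT in \<open>auto simp: T_def\<close>)
  have sum0: "(\<Sum>t\<in>T. d t * t) = 0"
    unfolding d_def distrib_right sum.distrib s1 s2 s3 using eq .
  have dF: "\<forall>t\<in>T. d t \<in> F"
  proof
    fix t assume "t \<in> T"
    have "(\<Sum>i\<in>{i\<in>Ia. fa i = t}. ca i) \<in> F"
      by (rule subfield_sum[OF sub]) (use fin cF in auto)
    moreover have "(\<Sum>i\<in>{i\<in>Ib. fb i = t}. cb i) \<in> F"
      by (rule subfield_sum[OF sub]) (use fin cF in auto)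
    moreover have "(\<Sum>i\<in>{i\<in>Ic. fc i = t}. cc i) \<in> F"
      by (rule subfield_sum[OF sub]) (use fin cF in auto)
    ultimately show "d t \<in> F" using sub unfolding d_def is_subfield_def by simp
  qed
  have d0: "\<forall>t\<in>T. d t = 0"
    using li[unfolded lin_indep_over_def, THEN spec, THEN spec, of T d] finT TB dF sum0 by simp
  have "sum ca Ia + sum cb Ib + sum cc Ic = (\<Sum>t\<in>T. d t)"
  proof -
    have g1: "(\<Sum>t\<in>T. sum ca {i\<in>Ia. fa i = t}) = sum ca Ia"
      by (rule sum.group) (use fin finT in \<open>auto simp: T_def\<close>)
    have g2: "(\<Sum>t\<in>T. sum cb {i\<in>Ib. fb i = t}) = sum cb Ib"
      by (rule sum.group) (use fin finT in \<open>auto simp: T_def\<close>)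
    have g3: "(\<Sum>t\<in>T. sum cc {i\<in>Ic. fc i = t}) = sum cc Ic"
      by (rule sum.group) (use fin finT in \<open>auto simp: T_def\<close>)
    show ?thesis unfolding d_def sum.distrib g1 g2 g3 ..
  qed
  also have "\<dots> = 0" using d0 by simp
  finally show ?thesis .
qed

theorem lemma5p3:
  fixes F :: "'a::field set" and B :: "'a set"
  assumes "is_subfield F"
    and "basis_over F B"
    and "multiplicative_set B"
  shows "F = UNIV"
proof -
  have sub: "is_subfield F" by fact
  have li: "lin_indep_over F B" and sp: "spans_over F B"
    using assms(2) by (auto simp: basis_over_def)
  have F0: "0 \<in> F" and F1: "1 \<in> F" and Fadd: "\<And>x y. x \<in> F \<Longrightarrow> y \<in> F \<Longrightarrow> x + y \<in> F"
    and Fmul: "\<And>x y. x \<in> F \<Longrightarrow> y \<in> F \<Longrightarrow> x * y \<in> F" and Fneg: "\<And>x. x \<in> F \<Longrightarrow> - x \<in> F"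
    using sub by (auto simp: is_subfield_def)
  have nz: "0 \<notin> B"
  proof
    assume "0 \<in> B"
    with li F1 have "(\<lambda>_. 1::'a) 0 = 0"
      unfolding lin_indep_over_def
      by (erule_tac x="{0}" in allE, erule_tac x="\<lambda>_. 1" in allE) auto
    then show False by simp
  qed
  have mulB: "b * b' \<in> B" if "b \<in> B" "b' \<in> B" for b b'
    using assms(3) that nz by (auto simp: multiplicative_set_def)
  obtain S1 e where S1: "finite S1" "S1 \<subseteq> B" "\<forall>s\<in>S1. e s \<in> F" "(1::'a) = (\<Sum>s\<in>S1. e s * s)"
    using sp[unfolded spans_over_def, THEN spec, of 1] by blast
  have "B \<noteq> {}"
  proof
    assume "B = {}" with S1 show False by simp
  qed
  then obtain b0 where b0: "b0 \<in> B" by blast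
  have e1: "sum e S1 = 1"
  proof -
    have "(\<Sum>i\<in>{()}. 1 * b0) + (\<Sum>s\<in>S1. (- e s) * (b0 * s)) + (\<Sum>i\<in>({}::unit set). 0 * b0) = 0"
    proof -
      have "(\<Sum>s\<in>S1. (- e s) * (b0 * s)) = - (b0 * (\<Sum>s\<in>S1. e s * s))"
        by (simp add: sum_distrib_left sum_negf algebra_simps)
      then show ?thesis using S1(4) by simp
    qed
    then have "sum (\<lambda>_. 1) {()} + sum (\<lambda>s. - e s) S1 + sum (\<lambda>_. 0) ({}::unit set) = 0"
      by (rule E3[OF sub li, where fa="\<lambda>_. b0" and fb="\<lambda>s. b0 * s" and fc="\<lambda>_. b0"])
        (use S1 b0 mulB F1 Fneg F0 in auto)
    then show ?thesis by (simp add: sum_negf)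
  qed
  show ?thesis
  proof (rule ccontr)
    assume "F \<noteq> UNIV"
    then obtain x where xF: "x \<notin> F" by blast
    obtain S c where S: "finite S" "S \<subseteq> B" "\<forall>b\<in>S. c b \<in> F" "x = (\<Sum>b\<in>S. c b * b)"
      using sp[unfolded spans_over_def, THEN spec, of x] by blast
    define \<sigma> where "\<sigma> = sum c S"
    have \<sigma>F: "\<sigma> \<in> F" unfolding \<sigma>_def by (rule subfield_sum[OF sub S(1) S(3)])
    define y where "y = x - \<sigma>"
    have y0: "y \<noteq> 0" using xF \<sigma>F by (auto simp: y_def)
    obtain S2 h where S2: "finite S2" "S2 \<subseteq> B" "\<forall>b\<in>S2. h b \<in> F" "inverse y = (\<Sum>b\<in>S2. h b * b)"
      using sp[unfolded spans_over_def, THEN spec, of "inverse y"] by blast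
    have "(\<Sum>p\<in>S \<times> S2. (c (fst p) * h (snd p)) * (fst p * snd p))
        + (\<Sum>k\<in>S2. (- (\<sigma> * h k)) * k) + (\<Sum>s\<in>S1. (- e s) * s) = 0"
    proof -
      have a: "(\<Sum>p\<in>S \<times> S2. (c (fst p) * h (snd p)) * (fst p * snd p)) = x * inverse y"
        unfolding S(4) S2(4) sum_product sum.cartesian_product
        by (intro sum.cong refl) (auto simp: algebra_simps)
      have b: "(\<Sum>k\<in>S2. (- (\<sigma> * h k)) * k) = - (\<sigma> * inverse y)"
        unfolding S2(4) by (simp add: sum_distrib_left sum_negf algebra_simps)
      have c: "(\<Sum>s\<in>S1. (- e s) * s) = - 1"
        unfolding S1(4) by (simp add: sum_negf)
      have "x * inverse y - \<sigma> * inverse y = 1"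
        using y0 by (simp add: y_def left_diff_distrib[symmetric])
      then show ?thesis unfolding a b c by simp
    qed
    then have "(\<Sum>p\<in>S \<times> S2. c (fst p) * h (snd p)) + (\<Sum>k\<in>S2. - (\<sigma> * h k)) + (\<Sum>s\<in>S1. - e s) = 0"
      by (rule E3[OF sub li, where fa="\<lambda>p. fst p * snd p" and fb="\<lambda>k. k" and fc="\<lambda>s. s"])
        (use S S1 S2 Fmul Fneg \<sigma>F in \<open>auto intro!: mulB\<close>)
    moreover have "(\<Sum>p\<in>S \<times> S2. c (fst p) * h (snd p)) = \<sigma> * sum h S2"
      unfolding \<sigma>_def sum_product sum.cartesian_product by (simp add: case_prod_beta)
    moreover have "(\<Sum>k\<in>S2. - (\<sigma> * h k)) = - (\<sigma> * sum h S2)"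
      by (simp add: sum_negf sum_distrib_left)
    ultimately have "sum e S1 = 0" by (simp add: sum_negf)
    with e1 show False by simp
  qed
qed

end
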